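(* Let $A\in\mathbb{C}^{n\times n}$ be Hermitian and let $Q\in\mathbb{C}^{n\times k}$, $2\le k\le n$, have orthonormal columns. Let $Q^*AQ=\Omega\widehat\Lambda\Omega^*$ with $\Omega$ unitary and $\widehat\Lambda=\mathrm{diag}(\widehat\lambda_1,\ldots,\widehat\lambda_k)$, and let $\widehat X=[\widehat x_1,\ldots,\widehat x_k]=Q\Omega$. Let $Q_\perp$ be such that $[Q\ Q_\perp]$ is unitary, and set $R=Q_\perp^*AQ\Omega=[r_1,\ldots,r_k]$, $A_3=Q_\perp^*AQ_\perp$, $\widehat\Lambda_2=\mathrm{diag}(\widehat\lambda_2,\ldots,\widehat\lambda_k)$, $R_2=[r_2,\ldots,r_k]$, and $\widehat x=\widehat x_1$. Let $(\lambda,x)$ be an eigenpair of $A$ with $\|x\|=1$, and define $\mathrm{Gap}=\min|\lambda-\lambda(A_3)|$, $\mathrm{gap}=\min|\lambda-\lambda(\widehat\Lambda_2)|$. Then: (i) if $\mathrm{Gap}>\|R_2\|^2/\mathrm{gap}$, then $$\sin\angle(x,\widehat x)\le\frac{\|r_1\|}{\mathrm{Gap}-\frac{\|R_2\|^2}{\mathrm{gap}}}\sqrt{1+\frac{\|R_2\|^2}{\mathrm{gap}^2}};$$ (ii) if $\mathrm{Gap}>\sum_{i=2}^k\frac{\|r_i\|^2}{|\lambda-\widehat\lambda_i|}$, then $$\sin\angle(x,\widehat x)\le\frac{\|r_1\|}{\mathrm{Gap}-\sum_{i=2}^k\frac{\|r_i\|^2}{|\lambda-\widehat\lambda_i|}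}\sqrt{1+\Big(\sum_{i=2}^k\frac{\|r_i\|}{|\lambda-\widehat\lambda_i|}\Big)^2}.$$
   Context: $\|\cdot\|$ is the Euclidean norm for vectors and the spectral norm for matrices. $\lambda(M)$ is the spectrum of a Hermitian matrix $M$ and $\min|\lambda-\lambda(M)|$ its distance to $\lambda$. For unit vectors, $\angle(x,\widehat x)=\arccos|\widehat x^*x|$. Note $\|r_i\|=\|A\widehat x_i-\widehat\lambda_i\widehat x_i\|$. A bound with a vanishing denominator is interpreted as $+\infty$. *)

theory Defs
  imports "Jordan_Normal_Form.Schur_Decomposition" "HOL-Library.Extended_Real"
begin

definition hermitian_mat :: "complex mat \<Rightarrow> bool" where
  "hermitian_mat M \<longleftrightarrow> mat_adjoint M = M"

definition unitary_mat :: "complex mat \<Rightarrow> bool" where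
  "unitary_mat U \<longleftrightarrow> dim_row U = dim_col U \<and>
     mat_adjoint U * U = 1\<^sub>m (dim_col U) \<and> U * mat_adjoint U = 1\<^sub>m (dim_row U)"

definition vnorm :: "complex vec \<Rightarrow> real" where
  "vnorm v = sqrt (\<Sum>i<dim_vec v. (cmod (v $ i))\<^sup>2)"

definition vinner :: "complex vec \<Rightarrow> complex vec \<Rightarrow> complex" where
  "vinner y x = (\<Sum>i<dim_vec x. cnj (y $ i) * x $ i)"

definition spec_norm :: "complex mat \<Rightarrow> real" where
  "spec_norm M = Sup {vnorm (M *\<^sub>v v) | v. v \<in> carrier_vec (dim_col M) \<and> vnorm v = 1}"

definition vangle :: "complex vec \<Rightarrow> complex vec \<Rightarrow> real" where
  "vangle x xh = arccos (cmod (vinner xh x))"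

text \<open>Distance from l to the spectrum of M; +\<infinity> when the spectrum is empty
  (e.g. for a 0 x 0 matrix).\<close>
definition spec_dist :: "complex \<Rightarrow> complex mat \<Rightarrow> ereal" where
  "spec_dist l M = (INF mu \<in> {mu. eigenvalue M mu}. ereal (cmod (l - mu)))"

definition diag_of :: "nat \<Rightarrow> (nat \<Rightarrow> complex) \<Rightarrow> complex mat" where
  "diag_of k d = mat k k (\<lambda>(i,j). if i = j then d i else 0)"

definition hcat :: "complex mat \<Rightarrow> complex mat \<Rightarrow> complex mat" where
  "hcat P Q = mat (dim_row P) (dim_col P + dim_col Q)
     (\<lambda>(i,j). if j < dim_col P then P $$ (i,j) else Q $$ (i, j - dim_col P))"

end

theory Submission
  imports Defs "Jordan_Normal_Form.Spectral_Radius" "HOL-Analysis.L2_Norm"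
begin


lemma adj_alt: "mat_adjoint A = mat (dim_col A) (dim_row A) (\<lambda>(i,j). cnj (A $$ (j,i)))"
  unfolding mat_adjoint_def mat_of_rows_def by (rule eq_matI, auto)

lemma adj_dim[simp]: fixes A :: "complex mat" shows "dim_row (mat_adjoint A) = dim_col A" "dim_col (mat_adjoint A) = dim_row A"
  by (simp_all add: adj_alt)

lemma adj_index[simp]: fixes A :: "complex mat" shows "i < dim_col A \<Longrightarrow> j < dim_row A \<Longrightarrow> mat_adjoint A $$ (i,j) = cnj (A $$ (j,i))"
  by (simp add: adj_alt)

lemma adj_carrier[simp]: fixes A :: "complex mat" shows "A \<in> carrier_mat n m \<Longrightarrow> mat_adjoint A \<in> carrier_mat m n"
  by auto

lemma adj_adj[simp]: fixes A :: "complex mat" shows "mat_adjoint (mat_adjoint A) = A"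
  by (rule eq_matI, auto)

lemma adj_mult: fixes A B :: "complex mat" assumes "A \<in> carrier_mat n k" "B \<in> carrier_mat k m"
  shows "mat_adjoint (A * B) = mat_adjoint B * mat_adjoint A"
  using assms by (intro eq_matI) (auto simp: scalar_prod_def cnj_sum mult.commute)

lemma adj_one[simp]: "mat_adjoint (1\<^sub>m n :: complex mat) = 1\<^sub>m n"
  by (rule eq_matI, auto)

lemma adj_add: fixes A B :: "complex mat" assumes "A \<in> carrier_mat n m" "B \<in> carrier_mat n m"
  shows "mat_adjoint (A + B) = mat_adjoint A + mat_adjoint B"
  using assms by (intro eq_matI) auto

definition ip :: "complex vec \<Rightarrow> complex vec \<Rightarrow> complex" where
  "ip u w = (\<Sum>i<dim_vec u. u $ i * cnj (w $ i))"

lemma ip_adj: assumes A: "A \<in> carrier_mat n m" and u: "u \<in> carrier_vec m" and w: "w \<in> carrier_vec n"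
  shows "ip (A *\<^sub>v u) w = ip u (mat_adjoint A *\<^sub>v w)"
proof -
  have "ip (A *\<^sub>v u) w = (\<Sum>i<n. (\<Sum>j<m. A $$ (i,j) * u $ j) * cnj (w $ i))"
    using A u w by (simp add: ip_def mult_mat_vec_def scalar_prod_def atLeast0LessThan)
  also have "\<dots> = (\<Sum>i<n. \<Sum>j<m. A $$ (i,j) * u $ j * cnj (w $ i))"
    by (simp add: sum_distrib_right)
  also have "\<dots> = (\<Sum>j<m. \<Sum>i<n. A $$ (i,j) * u $ j * cnj (w $ i))"
    by (rule sum.swap)
  also have "\<dots> = (\<Sum>j<m. u $ j * cnj (\<Sum>i<n. cnj (A $$ (i,j)) * w $ i))"
    by (simp add: cnj_sum sum_distrib_left mult_ac)
  also have "\<dots> = ip u (mat_adjoint A *\<^sub>v w)"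
    using A u w by (simp add: ip_def mult_mat_vec_def scalar_prod_def atLeast0LessThan)
  finally show ?thesis .
qed

lemma ip_cnj: "dim_vec u = dim_vec w \<Longrightarrow> cnj (ip u w) = ip w u"
  by (simp add: ip_def cnj_sum mult.commute)

lemma ip_self: "ip v v = complex_of_real ((vnorm v)\<^sup>2)"
proof -
  have "ip v v = (\<Sum>i<dim_vec v. complex_of_real ((cmod (v $ i))\<^sup>2))"
    unfolding ip_def by (rule sum.cong, simp_all add: complex_norm_square[symmetric])
  also have "\<dots> = complex_of_real ((vnorm v)\<^sup>2)"
  proof -
    have "0 \<le> (\<Sum>i<dim_vec v. (cmod (v $ i))\<^sup>2)" by (intro sum_nonneg) auto
    hence "(vnorm v)\<^sup>2 = (\<Sum>i<dim_vec v. (cmod (v $ i))\<^sup>2)"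
      unfolding vnorm_def by (rule real_sqrt_pow2)
    thus ?thesis by simp
  qed
  finally show ?thesis .
qed

lemma vnorm_L2: "vnorm v = L2_set (\<lambda>i. cmod (v $ i)) {..<dim_vec v}"
  by (simp add: vnorm_def L2_set_def)

lemma vnorm_nonneg[simp]: "vnorm v \<ge> 0"
  unfolding vnorm_def by (intro real_sqrt_ge_zero sum_nonneg) auto

lemma ip_add_right: "dim_vec a = dim_vec u \<Longrightarrow> dim_vec b = dim_vec u \<Longrightarrow> ip u (a + b) = ip u a + ip u b"
  by (simp add: ip_def sum.distrib distrib_left)

lemma ip_add_left: "dim_vec a = dim_vec b \<Longrightarrow> ip (a + b) u = ip a u + ip b u"
  by (simp add: ip_def sum.distrib distrib_right)

lemma isometry: assumes M: "M \<in> carrier_mat p q" and MM: "mat_adjoint M * M = 1\<^sub>m q"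
  and v: "v \<in> carrier_vec q"
  shows "vnorm (M *\<^sub>v v) = vnorm v"
proof -
  have "ip (M *\<^sub>v v) (M *\<^sub>v v) = ip v (mat_adjoint M *\<^sub>v (M *\<^sub>v v))"
    using M v by (intro ip_adj) auto
  also have "mat_adjoint M *\<^sub>v (M *\<^sub>v v) = v"
    using M v MM by (simp add: assoc_mult_mat_vec[symmetric, of _ q p _ q])
  finally have "complex_of_real ((vnorm (M *\<^sub>v v))\<^sup>2) = complex_of_real ((vnorm v)\<^sup>2)"
    by (simp only: ip_self)
  hence "(vnorm (M *\<^sub>v v))\<^sup>2 = (vnorm v)\<^sup>2" by (simp only: of_real_eq_iff)
  thus ?thesis by (simp add: power2_eq_iff_nonneg)
qed

lemma ip_cscalar: "dim_vec u = dim_vec w \<Longrightarrow> ip u w = u \<bullet>c w"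
  by (simp add: ip_def scalar_prod_def atLeast0LessThan)

lemma ip_smult: "dim_vec u = dim_vec w \<Longrightarrow> ip (a \<cdot>\<^sub>v u) (b \<cdot>\<^sub>v w) = a * cnj b * ip u w"
  unfolding ip_def sum_distrib_left by (rule sum.cong) (auto simp: mult_ac)

lemma vnorm_zero_iff: "vnorm v = 0 \<longleftrightarrow> v = 0\<^sub>v (dim_vec v)"
proof -
  have "vnorm v = 0 \<longleftrightarrow> (\<Sum>i<dim_vec v. (cmod (v $ i))\<^sup>2) = 0" by (simp add: vnorm_def)
  also have "\<dots> \<longleftrightarrow> (\<forall>i\<in>{..<dim_vec v}. (cmod (v $ i))\<^sup>2 = 0)"
    by (rule sum_nonneg_eq_0_iff) auto
  also have "\<dots> \<longleftrightarrow> v = 0\<^sub>v (dim_vec v)" by (auto simp: vec_eq_iff)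
  finally show ?thesis .
qed

lemma unitary_first_col: fixes v :: "complex vec"
  assumes v: "v \<in> carrier_vec n" and nv: "vnorm v = 1"
  shows "\<exists>W. W \<in> carrier_mat n n \<and> mat_adjoint W * W = 1\<^sub>m n \<and> W * mat_adjoint W = 1\<^sub>m n \<and> col W 0 = v"
proof -
  interpret cof_vec_space n "TYPE(complex)" .
  have v0: "v \<noteq> 0\<^sub>v n" using nv vnorm_zero_iff[of v] v by auto
  hence n0: "n > 0" using v by (cases n) auto
  define b where "b = basis_completion v"
  define ws where "ws = gram_schmidt n b"
  from basis_completion[OF v v0, folded b_def]
  have span_b: "span (set b) = carrier_vec n" and dist_b: "distinct b" 
    and indep: "\<not> lin_dep (set b)" and b: "set b \<subseteq> carrier_vec n" and hdb: "hd b = v" 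
    and len_b: "length b = n" by auto
  from hdb len_b n0 obtain vs where bv: "b = v # vs" by (cases b, auto)
  from gram_schmidt_result[OF b dist_b indep refl, folded ws_def]
  have ws: "set ws \<subseteq> carrier_vec n" "corthogonal ws" "length ws = n" 
    by (auto simp: len_b)
  from gram_schmidt_hd[OF v, of vs, folded bv] have hdws: "hd ws = v" unfolding ws_def .
  have ws0: "ws ! 0 = v" using hdws ws(3) n0 by (cases ws) auto
  define c where "c = (\<lambda>w. complex_of_real (vnorm w))"
  define ws' where "ws' = map (\<lambda>w. (1 / c w) \<cdot>\<^sub>v w) ws"
  have len': "length ws' = n" using ws by (simp add: ws'_def)
  have wsi: "i < n \<Longrightarrow> ws ! i \<in> carrier_vec n" for i using ws by auto
  have wsi': "i < n \<Longrightarrow> ws' ! i \<in> carrier_vec n" for i using wsi ws by (auto simp: ws'_def)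
  have cnz: "i < n \<Longrightarrow> c (ws ! i) \<noteq> 0" for i
  proof
    assume i: "i < n" and "c (ws ! i) = 0"
    hence "vnorm (ws ! i) = 0" by (simp add: c_def)
    hence "ws ! i = 0\<^sub>v n" using vnorm_zero_iff[of "ws ! i"] wsi[OF i] by auto
    hence "ws ! i \<bullet>c ws ! i = 0" by simp
    thus False using corthogonalD[OF ws(2), of i i] i ws(3) by auto
  qed
  have ip_ws: "i < n \<Longrightarrow> j < n \<Longrightarrow> ip (ws' ! j) (ws' ! i) = (if i = j then 1 else 0)" for i j
  proof -
    assume i: "i < n" and j: "j < n"
    have "ip (ws' ! j) (ws' ! i) = (1 / c (ws ! j)) * cnj (1 / c (ws ! i)) * ip (ws ! j) (ws ! i)"
      using i j ws wsi[OF i] wsi[OF j] by (simp add: ws'_def ip_smult)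
    also have "ip (ws ! j) (ws ! i) = ws ! j \<bullet>c ws ! i"
      using wsi[OF i] wsi[OF j] by (intro ip_cscalar) auto
    finally have eq: "ip (ws' ! j) (ws' ! i) = (1 / c (ws ! j)) * cnj (1 / c (ws ! i)) * (ws ! j \<bullet>c ws ! i)" .
    show ?thesis
    proof (cases "i = j")
      case True
      have "ws ! i \<bullet>c ws ! i = ip (ws ! i) (ws ! i)"
        by (rule ip_cscalar[symmetric]) simp
      also have "\<dots> = c (ws ! i) * c (ws ! i)" by (simp add: ip_self c_def power2_eq_square)
      finally show ?thesis using eq True cnz[OF i] by (simp add: c_def)
    next
      case False
      thus ?thesis using eq corthogonalD[OF ws(2), of j i] i j ws(3) by auto
    qed
  qed
  define W where "W = mat_of_cols n ws'"
  have W: "W \<in> carrier_mat n n" using mat_of_cols_carrier(1)[of n ws'] len' by (simp add: W_def)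
  have colW: "j < n \<Longrightarrow> col W j = ws' ! j" for j
    unfolding W_def using len' wsi' by (intro col_mat_of_cols) auto
  have WW: "mat_adjoint W * W = 1\<^sub>m n"
  proof (rule eq_matI)
    fix i j assume i: "i < dim_row (1\<^sub>m n)" and j: "j < dim_col (1\<^sub>m n)"
    hence i: "i < n" and j: "j < n" by auto
    have "(mat_adjoint W * W) $$ (i,j) = (\<Sum>t<n. cnj (W $$ (t,i)) * W $$ (t,j))"
      using W i j by (simp add: scalar_prod_def atLeast0LessThan)
    also have "\<dots> = (\<Sum>t<n. (col W j) $ t * cnj ((col W i) $ t))"
      using W i j by (intro sum.cong) auto
    also have "\<dots> = ip (col W j) (col W i)" using W j by (simp add: ip_def)
    also have "\<dots> = (if i = j then 1 else 0)" using colW i j ip_ws by simp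
    finally show "(mat_adjoint W * W) $$ (i,j) = 1\<^sub>m n $$ (i,j)" using i j by simp
  qed (use W in auto)
  have WW2: "W * mat_adjoint W = 1\<^sub>m n"
    by (rule mat_mult_left_right_inverse[OF _ W WW]) (use W in auto)
  have "col W 0 = v" using colW[OF n0] ws0 nv ws n0 by (simp add: ws'_def c_def)
  thus ?thesis using W WW WW2 by blast
qed

lemma one_four_block: "four_block_mat (1\<^sub>m 1) (0\<^sub>m 1 m) (0\<^sub>m m 1) (1\<^sub>m m) = (1\<^sub>m (Suc m) :: complex mat)"
proof (rule eq_matI)
  fix i j assume "i < dim_row (1\<^sub>m (Suc m) :: complex mat)" "j < dim_col (1\<^sub>m (Suc m) :: complex mat)"
  thus "four_block_mat (1\<^sub>m 1) (0\<^sub>m 1 m) (0\<^sub>m m 1) (1\<^sub>m m) $$ (i, j) = (1\<^sub>m (Suc m) :: complex mat) $$ (i, j)"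
    by (cases i; cases j) auto
qed auto



lemma herm_diag: fixes M :: "complex mat"
  assumes M: "M \<in> carrier_mat n n" and h: "mat_adjoint M = M"
  shows "\<exists>U. U \<in> carrier_mat n n \<and> mat_adjoint U * U = 1\<^sub>m n \<and> U * mat_adjoint U = 1\<^sub>m n \<and>
     (\<forall>i<n. \<forall>j<n. i \<noteq> j \<longrightarrow> (mat_adjoint U * M * U) $$ (i,j) = 0)"
  using M h
proof (induction n arbitrary: M)
  case 0
  show ?case by (rule exI[of _ "1\<^sub>m 0"]) auto
next
  case (Suc m M)
  let ?n = "Suc m"
  have M: "M \<in> carrier_mat ?n ?n" and h: "mat_adjoint M = M" using Suc by auto
  obtain e where "e \<in> spectrum M" using spectrum_non_empty[OF M] by auto
  hence ev: "eigenvalue M e" by (simp add: spectrum_def)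
  define u where "u = find_eigenvector M e"
  have eu: "eigenvector M u e" using find_eigenvector[OF M ev] by (simp add: u_def)
  hence u: "u \<in> carrier_vec ?n" "u \<noteq> 0\<^sub>v ?n" "M *\<^sub>v u = e \<cdot>\<^sub>v u"
    using M by (auto simp: eigenvector_def)
  have nu: "vnorm u \<noteq> 0" using u vnorm_zero_iff[of u] by auto
  define v where "v = (1 / complex_of_real (vnorm u)) \<cdot>\<^sub>v u"
  have v: "v \<in> carrier_vec ?n" using u by (simp add: v_def)
  have "vnorm v = 1"
  proof -
    have "ip v v = (1 / complex_of_real (vnorm u)) * cnj (1 / complex_of_real (vnorm u)) * ip u u"
      unfolding v_def by (rule ip_smult) simp
    also have "\<dots> = 1" using nu by (simp add: ip_self power2_eq_square)
    finally have "complex_of_real ((vnorm v)\<^sup>2) = 1" by (simp only: ip_self)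
    hence "(vnorm v)\<^sup>2 = 1" by (metis of_real_eq_1_iff)
    thus ?thesis using vnorm_nonneg[of v] power2_eq_1_iff[of "vnorm v"] by linarith
  qed
  from unitary_first_col[OF v this] obtain W where W: "W \<in> carrier_mat ?n ?n"
    and WW: "mat_adjoint W * W = 1\<^sub>m ?n" and WW2: "W * mat_adjoint W = 1\<^sub>m ?n"
    and W0: "col W 0 = v" by blast
  have Mv: "M *\<^sub>v v = e \<cdot>\<^sub>v v" using u M by (simp add: v_def mult_mat_vec smult_smult_assoc mult.commute)
  define A' where "A' = mat_adjoint W * M * W"
  have A': "A' \<in> carrier_mat ?n ?n" using W M unfolding A'_def by (metis adj_carrier mult_carrier_mat)
  have hA': "mat_adjoint A' = A'"
    unfolding A'_def using W M h by (simp add: adj_mult[of _ ?n ?n _ ?n] assoc_mult_mat[of _ ?n ?n _ ?n _ ?n])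
  have colA': "col A' 0 = e \<cdot>\<^sub>v unit_vec ?n 0"
  proof -
    have MW: "M * W \<in> carrier_mat ?n ?n" using M W by simp
    have "col A' 0 = col (mat_adjoint W * (M * W)) 0"
      unfolding A'_def using W M by (simp add: assoc_mult_mat[of _ ?n ?n _ ?n _ ?n])
    also have "\<dots> = mat_adjoint W *\<^sub>v col (M * W) 0"
      by (rule col_mult2[OF _ MW]) (use W in auto)
    also have "col (M * W) 0 = M *\<^sub>v col W 0"
      by (rule col_mult2[OF M W]) auto
    finally have "col A' 0 = mat_adjoint W *\<^sub>v (M *\<^sub>v col W 0)" .
    also have "\<dots> = e \<cdot>\<^sub>v (mat_adjoint W *\<^sub>v col W 0)" using W0 Mv mult_mat_vec[OF adj_carrier[OF W] v] by simp
    also have "mat_adjoint W *\<^sub>v col W 0 = col (mat_adjoint W * W) 0"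
      by (rule col_mult2[symmetric, OF adj_carrier[OF W] W]) simp
    also have "\<dots> = unit_vec ?n 0" using WW by simp
    finally show ?thesis .
  qed
  have A'c0: "i < ?n \<Longrightarrow> A' $$ (i,0) = (if i = 0 then e else 0)" for i
  proof -
    assume i: "i < ?n"
    have "A' $$ (i,0) = col A' 0 $ i" using A' i by simp
    thus ?thesis using colA' i by simp
  qed
  have A'r0: "0 < j \<Longrightarrow> j < ?n \<Longrightarrow> A' $$ (0,j) = 0" for j
  proof -
    assume j: "0 < j" "j < ?n"
    have "A' $$ (0,j) = mat_adjoint A' $$ (0,j)" using hA' by simp
    also have "\<dots> = cnj (A' $$ (j,0))" using A' j by simp
    finally show ?thesis using A'c0[OF j(2)] j by simp
  qed
  define A3 where "A3 = mat m m (\<lambda>(i,j). A' $$ (Suc i, Suc j))"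
  have A3: "A3 \<in> carrier_mat m m" by (simp add: A3_def)
  have hA3: "mat_adjoint A3 = A3"
  proof (rule eq_matI)
    fix i j assume "i < dim_row A3" "j < dim_col A3"
    hence i: "i < m" and j: "j < m" by (auto simp: A3_def)
    have "mat_adjoint A3 $$ (i,j) = cnj (A' $$ (Suc j, Suc i))" using i j by (simp add: A3_def)
    also have "\<dots> = mat_adjoint A' $$ (Suc i, Suc j)" using A' i j by simp
    also have "\<dots> = A3 $$ (i,j)" using hA' i j by (simp add: A3_def)
    finally show "mat_adjoint A3 $$ (i,j) = A3 $$ (i,j)" .
  qed (auto simp: A3_def)
  from Suc.IH[OF A3 hA3] obtain U' where U': "U' \<in> carrier_mat m m"
    and UU': "mat_adjoint U' * U' = 1\<^sub>m m" and UU2': "U' * mat_adjoint U' = 1\<^sub>m m"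
    and D': "\<forall>i<m. \<forall>j<m. i \<noteq> j \<longrightarrow> (mat_adjoint U' * A3 * U') $$ (i,j) = 0" by blast
  define E where "E = (mat 1 1 (\<lambda>_. e) :: complex mat)"
  have E: "E \<in> carrier_mat 1 1" by (simp add: E_def)
  have A'b: "A' = four_block_mat E (0\<^sub>m 1 m) (0\<^sub>m m 1) A3"
  proof (rule eq_matI)
    fix i j assume "i < dim_row (four_block_mat E (0\<^sub>m 1 m) (0\<^sub>m m 1) A3)"
      "j < dim_col (four_block_mat E (0\<^sub>m 1 m) (0\<^sub>m m 1) A3)"
    hence i: "i < ?n" and j: "j < ?n" using E A3 by auto
    show "A' $$ (i,j) = four_block_mat E (0\<^sub>m 1 m) (0\<^sub>m m 1) A3 $$ (i,j)"
      using i j E A3 A'c0[OF i] A'r0[of j] by (cases i; cases j) (auto simp: A3_def E_def)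
  qed (use A' E A3 in auto)
  define V where "V = four_block_mat (1\<^sub>m 1) (0\<^sub>m 1 m) (0\<^sub>m m 1) U'"
  have V: "V \<in> carrier_mat ?n ?n" using four_block_carrier_mat[OF one_carrier_mat U', of 1] by (simp add: V_def)
  have adjV: "mat_adjoint V = four_block_mat (1\<^sub>m 1) (0\<^sub>m 1 m) (0\<^sub>m m 1) (mat_adjoint U')"
  proof (rule eq_matI)
    fix i j assume "i < dim_row (four_block_mat (1\<^sub>m 1) (0\<^sub>m 1 m) (0\<^sub>m m 1) (mat_adjoint U'))"
      "j < dim_col (four_block_mat (1\<^sub>m 1) (0\<^sub>m 1 m) (0\<^sub>m m 1) (mat_adjoint U'))"
    hence i: "i < ?n" and j: "j < ?n" using U' by auto
    show "mat_adjoint V $$ (i,j) = four_block_mat (1\<^sub>m 1) (0\<^sub>m 1 m) (0\<^sub>m m 1) (mat_adjoint U') $$ (i,j)"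
      using i j U' V by (cases i; cases j) (auto simp: V_def)
  qed (use V U' in auto)
  have aU': "mat_adjoint U' \<in> carrier_mat m m" using U' by simp
  have VV: "mat_adjoint V * V = 1\<^sub>m ?n"
  proof -
    have "mat_adjoint V * V = four_block_mat (1\<^sub>m 1 * 1\<^sub>m 1 + 0\<^sub>m 1 m * 0\<^sub>m m 1) (1\<^sub>m 1 * 0\<^sub>m 1 m + 0\<^sub>m 1 m * U')
       (0\<^sub>m m 1 * 1\<^sub>m 1 + mat_adjoint U' * 0\<^sub>m m 1) (0\<^sub>m m 1 * 0\<^sub>m 1 m + mat_adjoint U' * U')"
      unfolding adjV unfolding V_def
      by (rule mult_four_block_mat[OF one_carrier_mat zero_carrier_mat zero_carrier_mat aU' one_carrier_mat zero_carrier_mat zero_carrier_mat U'])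
    also have "\<dots> = four_block_mat (1\<^sub>m 1) (0\<^sub>m 1 m) (0\<^sub>m m 1) (1\<^sub>m m)"
      using UU' aU' U' by simp
    also have "\<dots> = 1\<^sub>m ?n" by (rule one_four_block)
    finally show ?thesis .
  qed
  have VV2: "V * mat_adjoint V = 1\<^sub>m ?n"
  proof -
    have "V * mat_adjoint V = four_block_mat (1\<^sub>m 1 * 1\<^sub>m 1 + 0\<^sub>m 1 m * 0\<^sub>m m 1) (1\<^sub>m 1 * 0\<^sub>m 1 m + 0\<^sub>m 1 m * mat_adjoint U')
       (0\<^sub>m m 1 * 1\<^sub>m 1 + U' * 0\<^sub>m m 1) (0\<^sub>m m 1 * 0\<^sub>m 1 m + U' * mat_adjoint U')"
      unfolding adjV unfolding V_def
      by (rule mult_four_block_mat[OF one_carrier_mat zero_carrier_mat zero_carrier_mat U' one_carrier_mat zero_carrier_mat zero_carrier_mat aU'])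
    also have "\<dots> = four_block_mat (1\<^sub>m 1) (0\<^sub>m 1 m) (0\<^sub>m m 1) (1\<^sub>m m)"
      using UU2' aU' U' by simp
    also have "\<dots> = 1\<^sub>m ?n" by (rule one_four_block)
    finally show ?thesis .
  qed
  define U where "U = W * V"
  have U: "U \<in> carrier_mat ?n ?n" using W V by (simp add: U_def)
  have adjU: "mat_adjoint U = mat_adjoint V * mat_adjoint W" unfolding U_def using W V by (simp add: adj_mult)
  have aW: "mat_adjoint W \<in> carrier_mat ?n ?n" using W by simp
  have aV: "mat_adjoint V \<in> carrier_mat ?n ?n" using V by simp
  have WV: "W * V \<in> carrier_mat ?n ?n" using W V by simp
  have UU: "mat_adjoint U * U = 1\<^sub>m ?n"
  proof -
    have "mat_adjoint U * U = mat_adjoint V * mat_adjoint W * (W * V)" unfolding adjU by (simp only: U_def)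
    also have "\<dots> = mat_adjoint V * (mat_adjoint W * (W * V))" by (rule assoc_mult_mat[OF aV aW WV])
    also have "mat_adjoint W * (W * V) = (mat_adjoint W * W) * V" by (rule assoc_mult_mat[symmetric, OF aW W V])
    also have "\<dots> = V" using WW left_mult_one_mat[OF V] by simp
    finally show ?thesis using VV by simp
  qed
  have UU2: "U * mat_adjoint U = 1\<^sub>m ?n"
  proof -
    have aVW: "mat_adjoint V * mat_adjoint W \<in> carrier_mat ?n ?n" using aV aW by simp
    have "U * mat_adjoint U = W * V * (mat_adjoint V * mat_adjoint W)" unfolding adjU by (simp only: U_def)
    also have "\<dots> = W * (V * (mat_adjoint V * mat_adjoint W))" by (rule assoc_mult_mat[OF W V aVW])
    also have "V * (mat_adjoint V * mat_adjoint W) = (V * mat_adjoint V) * mat_adjoint W" by (rule assoc_mult_mat[symmetric, OF V aV aW])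
    also have "\<dots> = mat_adjoint W" using VV2 left_mult_one_mat[OF aW] by simp
    finally show ?thesis using WW2 by simp
  qed
  have "mat_adjoint U * M * U = mat_adjoint V * A' * V"
  proof -
    have aVW: "mat_adjoint V * mat_adjoint W \<in> carrier_mat ?n ?n" using aV aW by simp
    have aWM: "mat_adjoint W * M \<in> carrier_mat ?n ?n" using aW M by simp
    have "mat_adjoint U * M * U = mat_adjoint V * mat_adjoint W * M * (W * V)" unfolding adjU by (simp only: U_def)
    also have "\<dots> = mat_adjoint V * mat_adjoint W * M * W * V"
      using assoc_mult_mat[OF _ W V, of "mat_adjoint V * mat_adjoint W * M" ?n] aVW M by simp
    also have "mat_adjoint V * mat_adjoint W * M = mat_adjoint V * (mat_adjoint W * M)"
      by (rule assoc_mult_mat[OF aV aW M])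
    also have "mat_adjoint V * (mat_adjoint W * M) * W = mat_adjoint V * (mat_adjoint W * M * W)"
      by (rule assoc_mult_mat[OF aV aWM W])
    finally show ?thesis unfolding A'_def .
  qed
  also have "\<dots> = four_block_mat E (0\<^sub>m 1 m) (0\<^sub>m m 1) (mat_adjoint U' * A3 * U')"
  proof -
    have X: "mat_adjoint V * A' = four_block_mat E (0\<^sub>m 1 m) (0\<^sub>m m 1) (mat_adjoint U' * A3)"
    proof -
      have "mat_adjoint V * A' = four_block_mat (1\<^sub>m 1 * E + 0\<^sub>m 1 m * 0\<^sub>m m 1) (1\<^sub>m 1 * 0\<^sub>m 1 m + 0\<^sub>m 1 m * A3)
       (0\<^sub>m m 1 * E + mat_adjoint U' * 0\<^sub>m m 1) (0\<^sub>m m 1 * 0\<^sub>m 1 m + mat_adjoint U' * A3)"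
        unfolding adjV A'b
        by (rule mult_four_block_mat[OF one_carrier_mat zero_carrier_mat zero_carrier_mat aU' E zero_carrier_mat zero_carrier_mat A3])
      also have "\<dots> = four_block_mat E (0\<^sub>m 1 m) (0\<^sub>m m 1) (mat_adjoint U' * A3)"
        using E A3 aU' right_mult_zero_mat[OF aU'] by simp
      finally show ?thesis .
    qed
    have aUA: "mat_adjoint U' * A3 \<in> carrier_mat m m" using aU' A3 by simp
    have "mat_adjoint V * A' * V = four_block_mat (E * 1\<^sub>m 1 + 0\<^sub>m 1 m * 0\<^sub>m m 1) (E * 0\<^sub>m 1 m + 0\<^sub>m 1 m * U')
       (0\<^sub>m m 1 * 1\<^sub>m 1 + (mat_adjoint U' * A3) * 0\<^sub>m m 1) (0\<^sub>m m 1 * 0\<^sub>m 1 m + (mat_adjoint U' * A3) * U')"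
      unfolding X unfolding V_def
      by (rule mult_four_block_mat[OF E zero_carrier_mat zero_carrier_mat aUA one_carrier_mat zero_carrier_mat zero_carrier_mat U'])
    also have "\<dots> = four_block_mat E (0\<^sub>m 1 m) (0\<^sub>m m 1) (mat_adjoint U' * A3 * U')"
      using E A3 aU' U' right_mult_zero_mat[OF aUA] left_add_zero_mat[OF mult_carrier_mat[OF aUA U']] by simp
    finally show ?thesis .
  qed
  finally have D: "mat_adjoint U * M * U = four_block_mat E (0\<^sub>m 1 m) (0\<^sub>m m 1) (mat_adjoint U' * A3 * U')" .
  have "\<forall>i<?n. \<forall>j<?n. i \<noteq> j \<longrightarrow> (mat_adjoint U * M * U) $$ (i,j) = 0"
  proof (intro allI impI)
    fix i j assume i: "i < ?n" and j: "j < ?n" and ij: "i \<noteq> j"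
    show "(mat_adjoint U * M * U) $$ (i,j) = 0"
      unfolding D using i j ij E U' A3 D'[rule_format, of "i - 1" "j - 1"]
      by (cases i; cases j) auto
  qed
  thus ?case using U UU UU2 by blast
qed

lemma vnorm_sq: "(vnorm v)\<^sup>2 = (\<Sum>i<dim_vec v. (cmod (v $ i))\<^sup>2)"
  unfolding vnorm_def by (rule real_sqrt_pow2) (intro sum_nonneg, auto)

lemma herm_gap: fixes M :: "complex mat"
  assumes M: "M \<in> carrier_mat m m" and h: "mat_adjoint M = M" and m: "m > 0"
  shows "\<exists>g. spec_dist l M = ereal g \<and> 0 \<le> g \<and>
     (\<forall>y \<in> carrier_vec m. g * vnorm y \<le> vnorm (l \<cdot>\<^sub>v y - M *\<^sub>v y))"
proof -
  from herm_diag[OF M h] obtain U where U: "U \<in> carrier_mat m m" and UU: "mat_adjoint U * U = 1\<^sub>m m"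
    and UU2: "U * mat_adjoint U = 1\<^sub>m m"
    and Dd: "\<forall>i<m. \<forall>j<m. i \<noteq> j \<longrightarrow> (mat_adjoint U * M * U) $$ (i,j) = 0" by blast
  define D where "D = mat_adjoint U * M * U"
  have aU: "mat_adjoint U \<in> carrier_mat m m" using U by simp
  have D: "D \<in> carrier_mat m m" unfolding D_def using mult_carrier_mat[OF mult_carrier_mat[OF aU M] U] .
  define d where "d = (\<lambda>i. D $$ (i,i))"
  have UD: "U * D = M * U"
  proof -
    have "U * D = U * (mat_adjoint U * M * U)" by (simp add: D_def)
    also have "\<dots> = U * (mat_adjoint U * (M * U))" using aU M U by (simp add: assoc_mult_mat[OF aU M U])
    also have "\<dots> = (U * mat_adjoint U) * (M * U)" using aU M U by (simp add: assoc_mult_mat[symmetric, OF U aU, of "M * U" m])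
    also have "\<dots> = M * U" using UU2 M U by simp
    finally show ?thesis .
  qed
  have colD: "i < m \<Longrightarrow> col D i = d i \<cdot>\<^sub>v unit_vec m i" for i
    using D Dd by (intro eq_vecI) (auto simp: d_def D_def unit_vec_def)
  have eig: "i < m \<Longrightarrow> eigenvalue M (d i)" for i
  proof -
    assume i: "i < m"
    have Ue: "U *\<^sub>v unit_vec m i = col U i" using U i by (intro eq_vecI) (auto simp: mult_mat_vec_def)
    have "M *\<^sub>v col U i = col (M * U) i" by (rule col_mult2[OF M U i, symmetric])
    also have "\<dots> = col (U * D) i" using UD by simp
    also have "\<dots> = U *\<^sub>v col D i" by (rule col_mult2[OF U D i])
    also have "\<dots> = d i \<cdot>\<^sub>v (U *\<^sub>v unit_vec m i)" using colD[OF i] mult_mat_vec[OF U] by simp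
    also have "U *\<^sub>v unit_vec m i = col U i" using U i by (intro eq_vecI) (auto simp: mult_mat_vec_def)
    finally have ev: "M *\<^sub>v col U i = d i \<cdot>\<^sub>v col U i" .
    have "vnorm (col U i) = vnorm (unit_vec m i)"
      using isometry[OF U UU, of "unit_vec m i"] U i Ue by simp
    also have "vnorm (unit_vec m i) = 1"
    proof -
      have "(\<Sum>j<m. (cmod (unit_vec m i $ j))\<^sup>2) = (\<Sum>j<m. if j = i then 1 else 0)"
        by (rule sum.cong) (auto simp: unit_vec_def)
      also have "\<dots> = 1" using i by simp
      finally show ?thesis by (simp add: vnorm_def)
    qed
    finally have "col U i \<noteq> 0\<^sub>v m" using vnorm_zero_iff[of "col U i"] U by auto
    moreover have "col U i \<in> carrier_vec m" using U by (simp add: carrier_vecI)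
    ultimately have "eigenvector M (col U i) (d i)" using ev U M by (simp add: eigenvector_def)
    thus ?thesis by (auto simp: eigenvalue_def)
  qed
  have le: "i < m \<Longrightarrow> spec_dist l M \<le> ereal (cmod (l - d i))" for i
    unfolding spec_dist_def using eig by (intro INF_lower2[of "d i"]) auto
  have ge: "0 \<le> spec_dist l M"
    unfolding spec_dist_def by (intro INF_greatest) auto
  obtain g where g: "spec_dist l M = ereal g"
    using le[OF m] ge by (cases "spec_dist l M") auto
  have g0: "0 \<le> g" using ge g by simp
  have gd: "i < m \<Longrightarrow> g \<le> cmod (l - d i)" for i using le[of i] g by simp
  have "g * vnorm y \<le> vnorm (l \<cdot>\<^sub>v y - M *\<^sub>v y)" if y: "y \<in> carrier_vec m" for y
  proof -
    define w where "w = mat_adjoint U *\<^sub>v y"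
    have w: "w \<in> carrier_vec m" using aU y by (simp add: w_def)
    have nw: "vnorm w = vnorm y" unfolding w_def using isometry[OF aU _ y] UU2 by simp
    have yw: "y = U *\<^sub>v w" unfolding w_def using assoc_mult_mat_vec[OF U aU y] UU2 y by simp
    have "l \<cdot>\<^sub>v y - M *\<^sub>v y = U *\<^sub>v (l \<cdot>\<^sub>v w - D *\<^sub>v w)"
    proof -
      have "M *\<^sub>v y = (M * U) *\<^sub>v w" using yw assoc_mult_mat_vec[OF M U w] by simp
      also have "\<dots> = U *\<^sub>v (D *\<^sub>v w)" using UD assoc_mult_mat_vec[OF U D w] by simp
      finally have "M *\<^sub>v y = U *\<^sub>v (D *\<^sub>v w)" .
      moreover have "l \<cdot>\<^sub>v y = U *\<^sub>v (l \<cdot>\<^sub>v w)" using yw mult_mat_vec[OF U w] by simp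
      ultimately show ?thesis using mult_minus_distrib_mat_vec[OF U, of "l \<cdot>\<^sub>v w" "D *\<^sub>v w"] w D by simp
    qed
    hence "vnorm (l \<cdot>\<^sub>v y - M *\<^sub>v y) = vnorm (l \<cdot>\<^sub>v w - D *\<^sub>v w)"
      using isometry[OF U UU, of "l \<cdot>\<^sub>v w - D *\<^sub>v w"] w D by simp
    moreover have "(g * vnorm w)\<^sup>2 \<le> (vnorm (l \<cdot>\<^sub>v w - D *\<^sub>v w))\<^sup>2"
    proof -
      have Dw: "i < m \<Longrightarrow> (D *\<^sub>v w) $ i = d i * w $ i" for i
      proof -
        assume i: "i < m"
        have "(D *\<^sub>v w) $ i = (\<Sum>j<m. D $$ (i,j) * w $ j)"
          using D w i by (simp add: mult_mat_vec_def scalar_prod_def atLeast0LessThan)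
        also have "\<dots> = (\<Sum>j<m. if j = i then d i * w $ i else 0)"
          using Dd i by (intro sum.cong) (auto simp: d_def D_def)
        finally show ?thesis using i by simp
      qed
      have "(g * vnorm w)\<^sup>2 = (\<Sum>i<m. g\<^sup>2 * (cmod (w $ i))\<^sup>2)"
        using w by (simp add: power_mult_distrib vnorm_sq sum_distrib_left)
      also have "\<dots> \<le> (\<Sum>i<m. (cmod (l - d i))\<^sup>2 * (cmod (w $ i))\<^sup>2)"
        using gd g0 by (intro sum_mono mult_right_mono power_mono) auto
      also have "\<dots> = (vnorm (l \<cdot>\<^sub>v w - D *\<^sub>v w))\<^sup>2"
        unfolding vnorm_sq using w D Dw
        by (intro sum.cong) (auto simp: left_diff_distrib[symmetric] norm_mult power_mult_distrib)
      finally show ?thesis .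
    qed
    ultimately show ?thesis using nw by (metis power2_le_imp_le vnorm_nonneg)
  qed
  thus ?thesis using g g0 by blast
qed



lemma vnorm_smult: "vnorm (a \<cdot>\<^sub>v v) = cmod a * vnorm v"
proof -
  have "(vnorm (a \<cdot>\<^sub>v v))\<^sup>2 = (cmod a * vnorm v)\<^sup>2"
    by (simp add: vnorm_sq power_mult_distrib norm_mult sum_distrib_left)
  thus ?thesis by (simp add: power2_eq_iff_nonneg)
qed

lemma ip_cs: "dim_vec a = dim_vec b \<Longrightarrow> cmod (ip a b) \<le> vnorm a * vnorm b"
proof -
  assume d: "dim_vec a = dim_vec b"
  have "cmod (ip a b) \<le> (\<Sum>i<dim_vec a. cmod (a $ i * cnj (b $ i)))"
    unfolding ip_def by (rule norm_sum)
  also have "\<dots> = (\<Sum>i<dim_vec a. \<bar>cmod (a $ i)\<bar> * \<bar>cmod (b $ i)\<bar>)"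
    by (simp add: norm_mult)
  also have "\<dots> \<le> L2_set (\<lambda>i. cmod (a $ i)) {..<dim_vec a} * L2_set (\<lambda>i. cmod (b $ i)) {..<dim_vec a}"
    by (rule L2_set_mult_ineq)
  also have "\<dots> = vnorm a * vnorm b" using d by (simp add: vnorm_L2)
  finally show ?thesis .
qed

lemma frob_bound: fixes M :: "complex mat"
  assumes M: "M \<in> carrier_mat p q" and v: "v \<in> carrier_vec q"
  shows "vnorm (M *\<^sub>v v) \<le> sqrt (\<Sum>i<p. (\<Sum>j<q. (cmod (M $$ (i,j)))\<^sup>2)) * vnorm v"
proof -
  have row: "cmod ((M *\<^sub>v v) $ i) \<le> sqrt (\<Sum>j<q. (cmod (M $$ (i,j)))\<^sup>2) * vnorm v" if i: "i < p" for i
  proof -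
    have "(M *\<^sub>v v) $ i = (\<Sum>j<q. M $$ (i,j) * v $ j)"
      using M v i by (simp add: mult_mat_vec_def scalar_prod_def atLeast0LessThan)
    hence "cmod ((M *\<^sub>v v) $ i) \<le> (\<Sum>j<q. cmod (M $$ (i,j) * v $ j))"
      by (simp add: norm_sum)
    also have "\<dots> = (\<Sum>j<q. \<bar>cmod (M $$ (i,j))\<bar> * \<bar>cmod (v $ j)\<bar>)" by (simp add: norm_mult)
    also have "\<dots> \<le> L2_set (\<lambda>j. cmod (M $$ (i,j))) {..<q} * L2_set (\<lambda>j. cmod (v $ j)) {..<q}"
      by (rule L2_set_mult_ineq)
    also have "\<dots> = sqrt (\<Sum>j<q. (cmod (M $$ (i,j)))\<^sup>2) * vnorm v"
      using v by (simp add: vnorm_L2 L2_set_def)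
    finally show ?thesis .
  qed
  have "(vnorm (M *\<^sub>v v))\<^sup>2 = (\<Sum>i<p. (cmod ((M *\<^sub>v v) $ i))\<^sup>2)" using M by (simp add: vnorm_sq)
  also have "\<dots> \<le> (\<Sum>i<p. (sqrt (\<Sum>j<q. (cmod (M $$ (i,j)))\<^sup>2) * vnorm v)\<^sup>2)"
    using row by (intro sum_mono power_mono) auto
  also have "\<dots> = (sqrt (\<Sum>i<p. (\<Sum>j<q. (cmod (M $$ (i,j)))\<^sup>2)) * vnorm v)\<^sup>2"
    by (simp add: power_mult_distrib sum_distrib_right sum_nonneg)
  finally show ?thesis
    by (rule power2_le_imp_le) (use vnorm_nonneg[of v] in \<open>intro mult_nonneg_nonneg real_sqrt_ge_zero sum_nonneg, auto\<close>)
qed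

lemma spec_norm_bound: fixes M :: "complex mat"
  assumes M: "M \<in> carrier_mat p q" and v: "v \<in> carrier_vec q"
  shows "vnorm (M *\<^sub>v v) \<le> spec_norm M * vnorm v"
proof (cases "vnorm v = 0")
  case True
  hence "v = 0\<^sub>v q" using vnorm_zero_iff[of v] v by auto
  hence "M *\<^sub>v v = 0\<^sub>v p" using M by auto
  hence "vnorm (M *\<^sub>v v) = 0" using vnorm_zero_iff[of "M *\<^sub>v v"] by simp
  thus ?thesis using True by simp
next
  case False
  define F where "F = sqrt (\<Sum>i<p. (\<Sum>j<q. (cmod (M $$ (i,j)))\<^sup>2))"
  define S where "S = {vnorm (M *\<^sub>v u) | u. u \<in> carrier_vec (dim_col M) \<and> vnorm u = 1}"
  have bdd: "bdd_above S"
    unfolding bdd_above_def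
  proof (intro exI[of _ F] ballI)
    fix x assume "x \<in> S"
    then obtain u where u: "u \<in> carrier_vec q" "vnorm u = 1" and x: "x = vnorm (M *\<^sub>v u)"
      using M by (auto simp: S_def)
    show "x \<le> F" using frob_bound[OF M u(1)] u x by (simp add: F_def)
  qed
  define u where "u = (1 / complex_of_real (vnorm v)) \<cdot>\<^sub>v v"
  have u: "u \<in> carrier_vec (dim_col M)" using v M by (simp add: u_def)
  have nu: "vnorm u = 1" using False by (simp add: u_def vnorm_smult norm_divide)
  have Mu: "M *\<^sub>v u = (1 / complex_of_real (vnorm v)) \<cdot>\<^sub>v (M *\<^sub>v v)"
    unfolding u_def by (rule mult_mat_vec[OF M v])
  have "vnorm (M *\<^sub>v u) \<in> S" using u nu by (auto simp: S_def)
  hence "vnorm (M *\<^sub>v u) \<le> Sup S" by (rule cSup_upper[OF _ bdd])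
  hence "vnorm (M *\<^sub>v v) / vnorm v \<le> spec_norm M"
    using Mu by (simp add: S_def spec_norm_def vnorm_smult norm_divide)
  thus ?thesis using False vnorm_nonneg[of v] by (simp add: divide_le_eq mult.commute)
qed

lemma spec_norm_nonneg: fixes M :: "complex mat"
  assumes M: "M \<in> carrier_mat p q" and q: "q > 0"
  shows "0 \<le> spec_norm M"
proof -
  have "vnorm (unit_vec q 0) = 1"
  proof -
    have "(\<Sum>j<q. (cmod (unit_vec q 0 $ j))\<^sup>2) = (\<Sum>j<q. if j = 0 then 1 else 0)"
      by (rule sum.cong) (auto simp: unit_vec_def)
    also have "\<dots> = 1" using q by simp
    finally show ?thesis by (simp add: vnorm_def)
  qed
  hence "vnorm (M *\<^sub>v unit_vec q 0) \<le> spec_norm M"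
    using spec_norm_bound[OF M, of "unit_vec q 0"] by simp
  thus ?thesis using vnorm_nonneg order_trans by blast
qed

lemma spec_norm_adj_bound: fixes M :: "complex mat"
  assumes M: "M \<in> carrier_mat p q" and q: "q > 0" and w: "w \<in> carrier_vec p"
  shows "vnorm (mat_adjoint M *\<^sub>v w) \<le> spec_norm M * vnorm w"
proof -
  define u where "u = mat_adjoint M *\<^sub>v w"
  have u: "u \<in> carrier_vec q" using mult_mat_vec_carrier[OF adj_carrier[OF M] w] by (simp add: u_def)
  have "ip u u = ip (mat_adjoint M *\<^sub>v w) u" by (simp add: u_def)
  also have "\<dots> = ip w (mat_adjoint (mat_adjoint M) *\<^sub>v u)"
    using M w u by (intro ip_adj) auto
  also have "\<dots> = ip w (M *\<^sub>v u)" by simp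
  finally have "complex_of_real ((vnorm u)\<^sup>2) = ip w (M *\<^sub>v u)" by (simp add: ip_self)
  hence "(vnorm u)\<^sup>2 = cmod (ip w (M *\<^sub>v u))" by (metis norm_of_real abs_of_nonneg zero_le_power2)
  also have "\<dots> \<le> vnorm w * vnorm (M *\<^sub>v u)" using M w u by (intro ip_cs) auto
  also have "\<dots> \<le> vnorm w * (spec_norm M * vnorm u)"
    by (intro mult_left_mono spec_norm_bound[OF M u]) auto
  finally have "vnorm u * vnorm u \<le> (spec_norm M * vnorm w) * vnorm u"
    by (simp add: power2_eq_square mult_ac)
  hence "vnorm u \<le> spec_norm M * vnorm w \<or> vnorm u = 0"
    using vnorm_nonneg[of u] by (metis mult_right_le_imp_le order_le_less)
  moreover have "0 \<le> spec_norm M * vnorm w" using spec_norm_nonneg[OF M q] by simp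
  ultimately show ?thesis unfolding u_def by auto
qed

lemma reidx1: "1 \<le> k \<Longrightarrow> (\<Sum>i\<in>{1..<k}. f i) = (\<Sum>i<k-1. f (Suc i))"
  using sum.shift_bounds_nat_ivl[of f 0 1 "k-1"] by (simp add: atLeast0LessThan)

lemma split0: "1 \<le> (k::nat) \<Longrightarrow> (\<Sum>i<k. f i) = f 0 + (\<Sum>i\<in>{1..<k}. f i)"
proof -
  assume k: "1 \<le> k"
  have "{..<k} = insert 0 {1..<k}" using k by (auto simp: not_le)
  thus ?thesis by simp
qed

lemma hcat_adj: fixes P S :: "complex mat"
  assumes P: "P \<in> carrier_mat n a" and S: "S \<in> carrier_mat n b"
  shows "hcat P S * mat_adjoint (hcat P S) = P * mat_adjoint P + S * mat_adjoint S"
proof (rule eq_matI)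
  fix i j assume "i < dim_row (P * mat_adjoint P + S * mat_adjoint S)" "j < dim_col (P * mat_adjoint P + S * mat_adjoint S)"
  hence i: "i < n" and j: "j < n" using P S by auto
  let ?H = "hcat P S"
  have H: "?H \<in> carrier_mat n (a + b)" using P S by (auto simp: hcat_def)
  have "(?H * mat_adjoint ?H) $$ (i,j) = (\<Sum>t\<in>{0..<a+b}. ?H $$ (i,t) * cnj (?H $$ (j,t)))"
    using H i j by (simp add: scalar_prod_def)
  also have "\<dots> = (\<Sum>t\<in>{0..<a}. ?H $$ (i,t) * cnj (?H $$ (j,t))) + (\<Sum>t\<in>{a..<a+b}. ?H $$ (i,t) * cnj (?H $$ (j,t)))"
    by (rule sum.atLeastLessThan_concat[symmetric]) auto
  also have "(\<Sum>t\<in>{0..<a}. ?H $$ (i,t) * cnj (?H $$ (j,t))) = (\<Sum>t\<in>{0..<a}. P $$ (i,t) * cnj (P $$ (j,t)))"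
    using P S i j by (intro sum.cong) (auto simp: hcat_def)
  also have "(\<Sum>t\<in>{a..<a+b}. ?H $$ (i,t) * cnj (?H $$ (j,t))) = (\<Sum>t\<in>{0..<b}. ?H $$ (i,t+a) * cnj (?H $$ (j,t+a)))"
    using sum.shift_bounds_nat_ivl[of "\<lambda>t. ?H $$ (i,t) * cnj (?H $$ (j,t))" 0 a b] by (simp add: add.commute)
  also have "\<dots> = (\<Sum>t\<in>{0..<b}. S $$ (i,t) * cnj (S $$ (j,t)))"
    using P S i j by (intro sum.cong) (auto simp: hcat_def)
  finally show "(?H * mat_adjoint ?H) $$ (i,j) = (P * mat_adjoint P + S * mat_adjoint S) $$ (i,j)"
    using P S i j by (simp add: scalar_prod_def)
qed (use P S in \<open>auto simp: hcat_def\<close>)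

lemma vnorm_triangle: "dim_vec u = dim_vec v \<Longrightarrow> vnorm (u + v) \<le> vnorm u + vnorm v"
proof -
  assume d: "dim_vec u = dim_vec v"
  have "vnorm (u + v) = L2_set (\<lambda>i. cmod (u $ i + v $ i)) {..<dim_vec v}"
    using d unfolding vnorm_L2 by (intro L2_set_cong) auto
  also have "\<dots> \<le> L2_set (\<lambda>i. cmod (u $ i) + cmod (v $ i)) {..<dim_vec v}"
    by (intro L2_set_mono norm_triangle_ineq) auto
  also have "\<dots> \<le> L2_set (\<lambda>i. cmod (u $ i)) {..<dim_vec v} + L2_set (\<lambda>i. cmod (v $ i)) {..<dim_vec v}"
    by (rule L2_set_triangle_ineq)
  also have "\<dots> = vnorm u + vnorm v" using d by (simp add: vnorm_L2)
  finally show ?thesis .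
qed

lemma L2_set_sum_le: assumes "finite I" and "\<And>i j. 0 \<le> f i j"
  shows "L2_set (\<lambda>j. \<Sum>i\<in>I. f i j) A \<le> (\<Sum>i\<in>I. L2_set (f i) A)"
  using assms(1)
proof (induction I rule: finite_induct)
  case empty
  then show ?case by (simp add: L2_set_def)
next
  case (insert x F)
  have "L2_set (\<lambda>j. \<Sum>i\<in>insert x F. f i j) A = L2_set (\<lambda>j. f x j + (\<Sum>i\<in>F. f i j)) A"
    using insert by simp
  also have "\<dots> \<le> L2_set (f x) A + L2_set (\<lambda>j. \<Sum>i\<in>F. f i j) A" by (rule L2_set_triangle_ineq)
  also have "\<dots> \<le> L2_set (f x) A + (\<Sum>i\<in>F. L2_set (f i) A)" using insert by simp
  finally show ?case using insert by simp
qed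



lemma final_ereal:
  fixes Gap :: ereal and c sn t s r0 :: real
  assumes G: "Gap > ereal c" and sn: "sn \<le> t * s" and s: "0 \<le> s" and t: "0 \<le> t"
    and fin: "\<And>g. Gap = ereal g \<Longrightarrow> (g - c) * t \<le> r0"
    and inf: "Gap = \<infinity> \<Longrightarrow> t = 0"
  shows "ereal sn \<le> ereal r0 / (Gap - ereal c) * ereal s"
proof (cases Gap)
  case (real g)
  have gc: "g - c > 0" using G real by simp
  have "t \<le> r0 / (g - c)" using fin[OF real] gc by (simp add: le_divide_eq mult.commute)
  hence "sn \<le> r0 / (g - c) * s" using sn s by (meson mult_right_mono order_trans)
  moreover have "ereal r0 / (Gap - ereal c) = ereal (r0 / (g - c))" using real gc by simp
  ultimately show ?thesis by simp
next
  case PInf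
  hence "t = 0" using inf by simp
  hence "sn \<le> 0" using sn by simp
  thus ?thesis using PInf by simp
next
  case MInf
  thus ?thesis using G by simp
qed

lemma ip_unit: "i < dim_vec v \<Longrightarrow> ip v (unit_vec (dim_vec v) i) = v $ i"
proof -
  assume i: "i < dim_vec v"
  have "ip v (unit_vec (dim_vec v) i) = (\<Sum>j<dim_vec v. if j = i then v $ i else 0)"
    unfolding ip_def by (rule sum.cong) (auto simp: unit_vec_def)
  thus ?thesis using i by simp
qed

lemma ip_adj': assumes A: "A \<in> carrier_mat n m" and u: "u \<in> carrier_vec n" and w: "w \<in> carrier_vec m"
  shows "ip u (A *\<^sub>v w) = ip (mat_adjoint A *\<^sub>v u) w"
  using ip_adj[OF adj_carrier[OF A] u w] by simp

lemma adj_mv_index: fixes M :: "complex mat"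
  assumes M: "M \<in> carrier_mat p q" and x: "x \<in> carrier_vec p" and i: "i < q"
  shows "(mat_adjoint M *\<^sub>v x) $ i = (\<Sum>t<p. cnj (M $$ (t,i)) * x $ t)"
proof -
  have "(mat_adjoint M *\<^sub>v x) $ i = row (mat_adjoint M) i \<bullet> x" using M i by simp
  also have "\<dots> = (\<Sum>t<p. cnj (M $$ (t,i)) * x $ t)"
    using M x i by (simp add: scalar_prod_def atLeast0LessThan)
  finally show ?thesis .
qed

lemma ip_smult_left: "ip (a \<cdot>\<^sub>v u) w = a * ip u w"
  by (simp add: ip_def sum_distrib_left mult_ac)

theorem theorem4p1:
  fixes n k :: nat
    and A Q \<Omega> Qp :: "complex mat"
    and lh :: "nat \<Rightarrow> complex"
    and l :: complex and x :: "complex vec"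
  assumes k2: "2 \<le> k" and kn: "k \<le> n"
    and A: "A \<in> carrier_mat n n" "hermitian_mat A"
    and Q: "Q \<in> carrier_mat n k" "mat_adjoint Q * Q = 1\<^sub>m k"
    and Om: "\<Omega> \<in> carrier_mat k k" "unitary_mat \<Omega>"
    and decomp: "mat_adjoint Q * A * Q = \<Omega> * diag_of k lh * mat_adjoint \<Omega>"
    and Qp: "Qp \<in> carrier_mat n (n - k)" "unitary_mat (hcat Q Qp)"
    and eig: "eigenvector A x l" "vnorm x = 1"
  shows
   "let Xh = Q * \<Omega>; xh = col Xh 0;
        R = mat_adjoint Qp * A * Q * \<Omega>; r = (\<lambda>i. col R i);
        A3 = mat_adjoint Qp * A * Qp;
        R2 = mat (n - k) (k - 1) (\<lambda>(i,j). R $$ (i, j + 1));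
        Gap = spec_dist l A3;
        gap = Min {cmod (l - lh i) | i. 1 \<le> i \<and> i < k}
    in (gap > 0 \<and> Gap > ereal ((spec_norm R2)\<^sup>2 / gap) \<longrightarrow>
          ereal (sin (vangle x xh)) \<le>
            ereal (vnorm (r 0)) / (Gap - ereal ((spec_norm R2)\<^sup>2 / gap))
              * ereal (sqrt (1 + (spec_norm R2)\<^sup>2 / gap\<^sup>2)))
     \<and> (gap > 0 \<and> Gap > ereal (\<Sum>i\<in>{1..<k}. (vnorm (r i))\<^sup>2 / cmod (l - lh i)) \<longrightarrow>
          ereal (sin (vangle x xh)) \<le>
            ereal (vnorm (r 0)) / (Gap - ereal (\<Sum>i\<in>{1..<k}. (vnorm (r i))\<^sup>2 / cmod (l - lh i)))
              * ereal (sqrt (1 + (\<Sum>i\<in>{1..<k}. vnorm (r i) / cmod (l - lh i))\<^sup>2)))"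
proof -
  define m where "m = n - k"
  have Qc: "Q \<in> carrier_mat n k" and QQ: "mat_adjoint Q * Q = 1\<^sub>m k" using Q by auto
  have Omc: "\<Omega> \<in> carrier_mat k k" using Om by auto
  have OO: "mat_adjoint \<Omega> * \<Omega> = 1\<^sub>m k" and OO2: "\<Omega> * mat_adjoint \<Omega> = 1\<^sub>m k"
    using Om by (auto simp: unitary_mat_def)
  have Qpc: "Qp \<in> carrier_mat n m" using Qp by (simp add: m_def)
  have Ac: "A \<in> carrier_mat n n" and hA: "mat_adjoint A = A" using A by (auto simp: hermitian_mat_def)
  have xc: "x \<in> carrier_vec n" and Ax: "A *\<^sub>v x = l \<cdot>\<^sub>v x"
    using eig Ac by (auto simp: eigenvector_def)
  have nx: "vnorm x = 1" using eig by simp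
  have aQ: "mat_adjoint Q \<in> carrier_mat k n" using Qc by simp
  have aQp: "mat_adjoint Qp \<in> carrier_mat m n" using Qpc by simp
  have aO: "mat_adjoint \<Omega> \<in> carrier_mat k k" using Omc by simp
  have PP: "Q * mat_adjoint Q + Qp * mat_adjoint Qp = 1\<^sub>m n"
  proof -
    have "hcat Q Qp * mat_adjoint (hcat Q Qp) = 1\<^sub>m (dim_row (hcat Q Qp))"
      using Qp by (simp add: unitary_mat_def)
    moreover have "dim_row (hcat Q Qp) = n" using Qc by (simp add: hcat_def)
    ultimately show ?thesis using hcat_adj[OF Qc Qpc] by simp
  qed
  define y1 where "y1 = mat_adjoint Q *\<^sub>v x"
  define y2 where "y2 = mat_adjoint Qp *\<^sub>v x"
  have y1: "y1 \<in> carrier_vec k" using aQ xc by (simp add: y1_def)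
  have y2: "y2 \<in> carrier_vec m" using aQp xc by (simp add: y2_def)
  have xdec: "x = Q *\<^sub>v y1 + Qp *\<^sub>v y2"
  proof -
    have "x = (Q * mat_adjoint Q + Qp * mat_adjoint Qp) *\<^sub>v x" using PP xc by simp
    also have "\<dots> = (Q * mat_adjoint Q) *\<^sub>v x + (Qp * mat_adjoint Qp) *\<^sub>v x"
      by (rule add_mult_distrib_mat_vec[of _ n n]) (use Qc Qpc xc in auto)
    also have "\<dots> = Q *\<^sub>v y1 + Qp *\<^sub>v y2"
      unfolding y1_def y2_def using assoc_mult_mat_vec[OF Qc aQ xc] assoc_mult_mat_vec[OF Qpc aQp xc] by simp
    finally show ?thesis .
  qed
  have norm1: "(vnorm y1)\<^sup>2 + (vnorm y2)\<^sup>2 = 1"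
  proof -
    have "ip x x = ip x (Q *\<^sub>v y1) + ip x (Qp *\<^sub>v y2)"
      using xdec ip_add_right[of "Q *\<^sub>v y1" x "Qp *\<^sub>v y2"] xc Qc Qpc by (metis carrier_matD(1) carrier_vecD dim_mult_mat_vec)
    also have "ip x (Q *\<^sub>v y1) = ip y1 y1" using ip_adj'[OF Qc xc y1] by (simp add: y1_def)
    also have "ip x (Qp *\<^sub>v y2) = ip y2 y2" using ip_adj'[OF Qpc xc y2] by (simp add: y2_def)
    finally have "complex_of_real ((vnorm x)\<^sup>2) = complex_of_real ((vnorm y1)\<^sup>2) + complex_of_real ((vnorm y2)\<^sup>2)"
      by (simp only: ip_self)
    hence "(vnorm x)\<^sup>2 = (vnorm y1)\<^sup>2 + (vnorm y2)\<^sup>2" by (simp only: of_real_add[symmetric] of_real_eq_iff)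
    thus ?thesis using nx by simp
  qed
  have k0: "0 < k" using k2 by simp
  define z where "z = mat_adjoint \<Omega> *\<^sub>v y1"
  have z: "z \<in> carrier_vec k" using aO y1 by (simp add: z_def)
  have nz: "vnorm z = vnorm y1" unfolding z_def using isometry[OF aO _ y1] OO2 by simp
  have y1z: "y1 = \<Omega> *\<^sub>v z"
    unfolding z_def using assoc_mult_mat_vec[OF Omc aO y1] OO2 y1 by simp
  have z0: "z $ 0 = vinner (col (Q * \<Omega>) 0) x"
  proof -
    have QO: "Q * \<Omega> \<in> carrier_mat n k" using Qc Omc by simp
    have "z = mat_adjoint (Q * \<Omega>) *\<^sub>v x"
      unfolding z_def y1_def adj_mult[OF Qc Omc] using assoc_mult_mat_vec[OF aO aQ xc] by simp
    hence "z $ 0 = (\<Sum>t<n. cnj ((Q * \<Omega>) $$ (t, 0)) * x $ t)"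
      using adj_mv_index[OF QO xc k0] by simp
    also have "\<dots> = vinner (col (Q * \<Omega>) 0) x"
      unfolding vinner_def using QO xc k0 carrier_matD[OF QO] by (intro sum.cong) auto
    finally show ?thesis .
  qed
  define R where "R = mat_adjoint Qp * A * Q * \<Omega>"
  have Rc: "R \<in> carrier_mat m k" unfolding R_def
    by (rule mult_carrier_mat[OF mult_carrier_mat[OF mult_carrier_mat[OF aQp Ac] Qc] Omc])
  have Rv: "R *\<^sub>v v = mat_adjoint Qp *\<^sub>v (A *\<^sub>v (Q *\<^sub>v (\<Omega> *\<^sub>v v)))" if v: "v \<in> carrier_vec k" for v
  proof -
    have QAc: "mat_adjoint Qp * A \<in> carrier_mat m n" using aQp Ac by simp
    have QAQc: "mat_adjoint Qp * A * Q \<in> carrier_mat m k" using QAc Qc by simp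
    have Ov: "\<Omega> *\<^sub>v v \<in> carrier_vec k" using Omc v by simp
    have QOv: "Q *\<^sub>v (\<Omega> *\<^sub>v v) \<in> carrier_vec n" using Qc Ov by simp
    show ?thesis unfolding R_def
      using assoc_mult_mat_vec[OF QAQc Omc v] assoc_mult_mat_vec[OF QAc Qc Ov] assoc_mult_mat_vec[OF aQp Ac QOv]
      by simp
  qed
  have eq1: "(l - lh i) * z $ i = ip y2 (col R i)" if i: "i < k" for i
  proof -
    have Ax2: "A *\<^sub>v x = A *\<^sub>v (Q *\<^sub>v y1) + A *\<^sub>v (Qp *\<^sub>v y2)"
      using xdec mult_add_distrib_mat_vec[OF Ac, of "Q *\<^sub>v y1" "Qp *\<^sub>v y2"] Qc Qpc y1 y2 by simp
    define P where "P = mat_adjoint Q *\<^sub>v (A *\<^sub>v (Qp *\<^sub>v y2))"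
    have Pc: "P \<in> carrier_vec k" using aQ Ac Qpc y2 by (simp add: P_def)
    define Dg where "Dg = diag_of k lh"
    have Dgc: "Dg \<in> carrier_mat k k" by (simp add: Dg_def diag_of_def)
    have dz: "(Dg *\<^sub>v z) $ i = lh i * z $ i"
    proof -
      have "(Dg *\<^sub>v z) $ i = (\<Sum>j<k. Dg $$ (i,j) * z $ j)"
        using Dgc z i by (simp add: mult_mat_vec_def scalar_prod_def atLeast0LessThan)
      also have "\<dots> = (\<Sum>j<k. if j = i then lh i * z $ i else 0)"
        using i by (intro sum.cong) (auto simp: Dg_def diag_of_def)
      finally show ?thesis using i by simp
    qed
    have t1: "mat_adjoint Q *\<^sub>v (A *\<^sub>v (Q *\<^sub>v y1)) = \<Omega> *\<^sub>v (Dg *\<^sub>v z)"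
    proof -
      have QA: "mat_adjoint Q * A \<in> carrier_mat k n" using aQ Ac by simp
      have ODg: "\<Omega> * Dg \<in> carrier_mat k k" using Omc Dgc by simp
      have "mat_adjoint Q *\<^sub>v (A *\<^sub>v (Q *\<^sub>v y1)) = (mat_adjoint Q * A * Q) *\<^sub>v y1"
        using assoc_mult_mat_vec[OF QA Qc y1] assoc_mult_mat_vec[OF aQ Ac, of "Q *\<^sub>v y1"] Qc y1 by simp
      also have "\<dots> = (\<Omega> * Dg * mat_adjoint \<Omega>) *\<^sub>v y1" using decomp by (simp add: Dg_def)
      also have "\<dots> = \<Omega> *\<^sub>v (Dg *\<^sub>v z)"
        unfolding z_def using assoc_mult_mat_vec[OF ODg aO y1] assoc_mult_mat_vec[OF Omc Dgc, of "mat_adjoint \<Omega> *\<^sub>v y1"] aO y1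
        by simp
      finally show ?thesis .
    qed
    have "l \<cdot>\<^sub>v z = mat_adjoint \<Omega> *\<^sub>v (mat_adjoint Q *\<^sub>v (A *\<^sub>v x))"
      unfolding Ax z_def y1_def using mult_mat_vec[OF aQ xc] mult_mat_vec[OF aO, of "mat_adjoint Q *\<^sub>v x"] aQ xc by simp
    also have "\<dots> = mat_adjoint \<Omega> *\<^sub>v (\<Omega> *\<^sub>v (Dg *\<^sub>v z) + P)"
      unfolding Ax2 P_def t1[symmetric] using mult_add_distrib_mat_vec[OF aQ] Ac Qc Qpc y1 y2 by simp
    also have "\<dots> = Dg *\<^sub>v z + mat_adjoint \<Omega> *\<^sub>v P"
      using mult_add_distrib_mat_vec[OF aO, of "\<Omega> *\<^sub>v (Dg *\<^sub>v z)" P] assoc_mult_mat_vec[OF aO Omc, of "Dg *\<^sub>v z"] OO Omc Dgc z Pc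
      by simp
    finally have "l * z $ i = lh i * z $ i + (mat_adjoint \<Omega> *\<^sub>v P) $ i"
      using dz i z Dgc aO Pc by (metis carrier_vecD dim_mult_mat_vec carrier_matD(1) index_add_vec(1) index_smult_vec(1))
    moreover have "(mat_adjoint \<Omega> *\<^sub>v P) $ i = ip y2 (col R i)"
    proof -
      have e: "unit_vec k i \<in> carrier_vec k" by simp
      have Oe: "\<Omega> *\<^sub>v unit_vec k i \<in> carrier_vec k" using Omc by simp
      have QOe: "Q *\<^sub>v (\<Omega> *\<^sub>v unit_vec k i) \<in> carrier_vec n" using Qc Oe by simp
      have AQOe: "A *\<^sub>v (Q *\<^sub>v (\<Omega> *\<^sub>v unit_vec k i)) \<in> carrier_vec n" using Ac QOe by simp
      have colR: "col R i = R *\<^sub>v unit_vec k i" using Rc i by (intro eq_vecI) (auto simp: mult_mat_vec_def)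
      have "(mat_adjoint \<Omega> *\<^sub>v P) $ i = ip (mat_adjoint \<Omega> *\<^sub>v P) (unit_vec k i)"
        using ip_unit[of i "mat_adjoint \<Omega> *\<^sub>v P", unfolded dim_mult_mat_vec carrier_matD[OF aO]] i by simp
      also have "\<dots> = ip P (\<Omega> *\<^sub>v unit_vec k i)" using ip_adj'[OF Omc Pc e] by simp
      also have "\<dots> = ip (A *\<^sub>v (Qp *\<^sub>v y2)) (Q *\<^sub>v (\<Omega> *\<^sub>v unit_vec k i))"
        unfolding P_def using ip_adj'[OF Qc _ Oe, of "A *\<^sub>v (Qp *\<^sub>v y2)"] Ac Qpc y2 by simp
      also have "\<dots> = ip (Qp *\<^sub>v y2) (A *\<^sub>v (Q *\<^sub>v (\<Omega> *\<^sub>v unit_vec k i)))"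
        using ip_adj[OF Ac _ QOe, of "Qp *\<^sub>v y2"] hA Qpc y2 by simp
      also have "\<dots> = ip y2 (mat_adjoint Qp *\<^sub>v (A *\<^sub>v (Q *\<^sub>v (\<Omega> *\<^sub>v unit_vec k i))))"
        using ip_adj[OF Qpc y2 AQOe] by simp
      also have "\<dots> = ip y2 (col R i)" using colR Rv[OF e] by simp
      finally show ?thesis .
    qed
    ultimately show ?thesis by (simp add: algebra_simps)
  qed
  define A3 where "A3 = mat_adjoint Qp * A * Qp"
  have QAc: "mat_adjoint Qp * A \<in> carrier_mat m n" using aQp Ac by simp
  have A3c: "A3 \<in> carrier_mat m m" unfolding A3_def by (rule mult_carrier_mat[OF QAc Qpc])
  have hA3: "mat_adjoint A3 = A3"
  proof -
    have "mat_adjoint A3 = mat_adjoint Qp * mat_adjoint (mat_adjoint Qp * A)"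
      unfolding A3_def by (rule adj_mult[OF QAc Qpc])
    also have "mat_adjoint (mat_adjoint Qp * A) = A * Qp" using adj_mult[OF aQp Ac] hA by simp
    also have "mat_adjoint Qp * (A * Qp) = A3" unfolding A3_def by (rule assoc_mult_mat[symmetric, OF aQp Ac Qpc])
    finally show ?thesis .
  qed
  have eq2: "l \<cdot>\<^sub>v y2 - A3 *\<^sub>v y2 = R *\<^sub>v z"
  proof -
    have "l \<cdot>\<^sub>v y2 = mat_adjoint Qp *\<^sub>v (A *\<^sub>v x)"
      unfolding Ax y2_def using mult_mat_vec[OF aQp xc] by simp
    also have "A *\<^sub>v x = A *\<^sub>v (Q *\<^sub>v y1) + A *\<^sub>v (Qp *\<^sub>v y2)"
      using xdec mult_add_distrib_mat_vec[OF Ac, of "Q *\<^sub>v y1" "Qp *\<^sub>v y2"] Qc Qpc y1 y2 by simp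
    also have "mat_adjoint Qp *\<^sub>v (A *\<^sub>v (Q *\<^sub>v y1) + A *\<^sub>v (Qp *\<^sub>v y2))
        = mat_adjoint Qp *\<^sub>v (A *\<^sub>v (Q *\<^sub>v y1)) + mat_adjoint Qp *\<^sub>v (A *\<^sub>v (Qp *\<^sub>v y2))"
      using mult_add_distrib_mat_vec[OF aQp] Ac Qc Qpc y1 y2 by simp
    also have "mat_adjoint Qp *\<^sub>v (A *\<^sub>v (Q *\<^sub>v y1)) = R *\<^sub>v z" using Rv[OF z] y1z by simp
    also have "mat_adjoint Qp *\<^sub>v (A *\<^sub>v (Qp *\<^sub>v y2)) = A3 *\<^sub>v y2"
      unfolding A3_def using assoc_mult_mat_vec[OF QAc Qpc y2] assoc_mult_mat_vec[OF aQp Ac, of "Qp *\<^sub>v y2"] Qpc y2 by simp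
    finally have e: "l \<cdot>\<^sub>v y2 = R *\<^sub>v z + A3 *\<^sub>v y2" .
    show ?thesis
    proof (rule eq_vecI)
      fix j assume "j < dim_vec (R *\<^sub>v z)"
      hence j: "j < m" using Rc by simp
      have "(l \<cdot>\<^sub>v y2) $ j = (R *\<^sub>v z + A3 *\<^sub>v y2) $ j" using e by simp
      thus "(l \<cdot>\<^sub>v y2 - A3 *\<^sub>v y2) $ j = (R *\<^sub>v z) $ j" using j y2 A3c Rc by simp
    qed (use y2 A3c Rc in auto)
  qed
  define I where "I = {1..<k}"
  have k1: "1 \<le> k" using k2 by simp
  have nz2: "(vnorm z)\<^sup>2 = (cmod (z $ 0))\<^sup>2 + (\<Sum>i\<in>I. (cmod (z $ i))\<^sup>2)"
    unfolding vnorm_sq I_def using z split0[OF k1, of "\<lambda>i. (cmod (z $ i))\<^sup>2"] by simp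
  have S0: "0 \<le> (\<Sum>i\<in>I. (cmod (z $ i))\<^sup>2)" by (intro sum_nonneg) auto
  have w1: "(cmod (z $ 0))\<^sup>2 \<le> 1" using nz2 nz norm1 S0 vnorm_nonneg[of y2] by (smt (verit) zero_le_power2)
  hence w1': "cmod (z $ 0) \<le> 1" by (simp add: power_le_one_iff)
  have sin_eq: "sin (vangle x (col (Q * \<Omega>) 0)) = sqrt ((vnorm y2)\<^sup>2 + (\<Sum>i\<in>I. (cmod (z $ i))\<^sup>2))"
  proof -
    have "sin (vangle x (col (Q * \<Omega>) 0)) = sin (arccos (cmod (z $ 0)))"
      by (simp add: vangle_def z0)
    also have "\<dots> = sqrt (1 - (cmod (z $ 0))\<^sup>2)"
      using w1' norm_ge_zero[of "z $ 0"] by (intro sin_arccos) linarith+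
    also have "1 - (cmod (z $ 0))\<^sup>2 = (vnorm y2)\<^sup>2 + (\<Sum>i\<in>I. (cmod (z $ i))\<^sup>2)"
      using nz2 nz norm1 by simp
    finally show ?thesis .
  qed
  define gap where "gap = Min {cmod (l - lh i) | i. 1 \<le> i \<and> i < k}"
  have gap_le: "gap \<le> cmod (l - lh i)" if i: "i \<in> I" for i
    unfolding gap_def using i by (intro Min_le) (auto simp: I_def)
  define r where "r = (\<lambda>i. col R i)"
  have dimr: "dim_vec (r i) = m" for i using Rc by (simp add: r_def)
  have vr: "vnorm (r i) = L2_set (\<lambda>j. cmod (R $$ (j,i))) {..<m}" if i: "i < k" for i
    unfolding vnorm_L2 dimr using Rc i by (intro L2_set_cong) (auto simp: r_def)
  have zb: "cmod (z $ i) * cmod (l - lh i) = cmod (ip y2 (r i))" if i: "i \<in> I" for i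
  proof -
    have "z $ i * (l - lh i) = ip y2 (r i)" using eq1[of i] i by (simp add: I_def r_def mult.commute)
    hence "cmod (z $ i * (l - lh i)) = cmod (ip y2 (r i))" by simp
    thus ?thesis by (simp only: norm_mult)
  qed
  have cs: "cmod (ip y2 (r i)) \<le> vnorm y2 * vnorm (r i)" for i
    using y2 dimr by (intro ip_cs) auto
  define v2 where "v2 = vec m (\<lambda>j. \<Sum>i\<in>I. R $$ (j,i) * z $ i)"
  have Rz: "R *\<^sub>v z = z $ 0 \<cdot>\<^sub>v r 0 + v2"
  proof (rule eq_vecI)
    fix j assume "j < dim_vec (z $ 0 \<cdot>\<^sub>v r 0 + v2)"
    hence j: "j < m" by (simp add: v2_def)
    have "(R *\<^sub>v z) $ j = (\<Sum>i<k. R $$ (j,i) * z $ i)"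
      using Rc z j by (simp add: mult_mat_vec_def scalar_prod_def atLeast0LessThan)
    also have "\<dots> = R $$ (j,0) * z $ 0 + (\<Sum>i\<in>I. R $$ (j,i) * z $ i)"
      unfolding I_def by (rule split0[OF k1])
    finally show "(R *\<^sub>v z) $ j = (z $ 0 \<cdot>\<^sub>v r 0 + v2) $ j"
      using j Rc k0 by (simp add: v2_def r_def mult.commute)
  qed (use Rc in \<open>auto simp: v2_def r_def\<close>)
  have Rzn: "vnorm (R *\<^sub>v z) \<le> vnorm (r 0) + vnorm v2"
  proof -
    have "vnorm (R *\<^sub>v z) \<le> vnorm (z $ 0 \<cdot>\<^sub>v r 0) + vnorm v2"
      unfolding Rz by (rule vnorm_triangle) (simp add: dimr v2_def)
    also have "vnorm (z $ 0 \<cdot>\<^sub>v r 0) \<le> vnorm (r 0)"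
      unfolding vnorm_smult using w1' vnorm_nonneg[of "r 0"] by (simp add: mult_left_le_one_le)
    finally show ?thesis by simp
  qed
  define Gap where "Gap = spec_dist l A3"
  have Gfin: "g * vnorm y2 \<le> vnorm (r 0) + vnorm v2" if G: "Gap = ereal g" for g
  proof (cases "m = 0")
    case True
    have "Gap = \<infinity>"
    proof -
      have "{mu. eigenvalue A3 mu} = {}"
      proof (auto simp: eigenvalue_def eigenvector_def)
        fix mu v assume "v \<in> carrier_vec (dim_row A3)" "v \<noteq> 0\<^sub>v (dim_row A3)"
        thus False using A3c True by (auto simp: vec_eq_iff)
      qed
      thus ?thesis by (simp add: Gap_def spec_dist_def top_ereal_def)
    qed
    thus ?thesis using G by simp
  next
    case False
    then obtain g0 where g0: "spec_dist l A3 = ereal g0"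
      and b: "\<forall>y \<in> carrier_vec m. g0 * vnorm y \<le> vnorm (l \<cdot>\<^sub>v y - A3 *\<^sub>v y)"
      using herm_gap[OF A3c hA3, of l] by auto
    have "g = g0" using G g0 by (simp add: Gap_def)
    moreover have "g0 * vnorm y2 \<le> vnorm (l \<cdot>\<^sub>v y2 - A3 *\<^sub>v y2)" using b y2 by blast
    ultimately have "g * vnorm y2 \<le> vnorm (R *\<^sub>v z)" using eq2 by simp
    thus ?thesis using Rzn by simp
  qed
  have Ginf: "vnorm y2 = 0" if G: "Gap = \<infinity>"
  proof (cases "m = 0")
    case True
    thus ?thesis using y2 by (simp add: vnorm_def)
  next
    case False
    then obtain g0 where g0: "spec_dist l A3 = ereal g0"
      using herm_gap[OF A3c hA3, of l] by auto
    thus ?thesis using G by (simp add: Gap_def)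
  qed
  define sn where "sn = sin (vangle x (col (Q * \<Omega>) 0))"
  define P where "P = (\<Sum>i\<in>I. (cmod (z $ i))\<^sup>2)"
  have snP: "sn = sqrt ((vnorm y2)\<^sup>2 + P)" using sin_eq by (simp add: sn_def P_def)
  have sn_bound: "sn \<le> vnorm y2 * sqrt (1 + B\<^sup>2)" if PB: "P \<le> (B * vnorm y2)\<^sup>2" for B
  proof -
    have "sn \<le> sqrt ((vnorm y2)\<^sup>2 + (B * vnorm y2)\<^sup>2)" unfolding snP using PB by simp
    also have "(vnorm y2)\<^sup>2 + (B * vnorm y2)\<^sup>2 = (vnorm y2)\<^sup>2 * (1 + B\<^sup>2)" by (simp add: algebra_simps power_mult_distrib)
    also have "sqrt \<dots> = vnorm y2 * sqrt (1 + B\<^sup>2)" by (simp add: real_sqrt_mult)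
    finally show ?thesis .
  qed
  have pos: "0 < cmod (l - lh i)" if "0 < gap" "i \<in> I" for i using gap_le[of i] that by linarith
  have zi: "cmod (z $ i) \<le> vnorm y2 * vnorm (r i) / cmod (l - lh i)" if "0 < gap" "i \<in> I" for i
    using zb[of i] cs[of i] pos[OF that] that by (simp add: le_divide_eq)
  define Ss where "Ss = (\<Sum>i\<in>{1..<k}. (vnorm (r i))\<^sup>2 / cmod (l - lh i))"
  define T where "T = (\<Sum>i\<in>{1..<k}. vnorm (r i) / cmod (l - lh i))"
  have partII: "0 < gap \<and> ereal Ss < Gap \<longrightarrow>
      ereal sn \<le> ereal (vnorm (r 0)) / (Gap - ereal Ss) * ereal (sqrt (1 + T\<^sup>2))"
  proof (intro impI, elim conjE)
    assume gp: "0 < gap" and G: "ereal Ss < Gap"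
    have v2b: "vnorm v2 \<le> Ss * vnorm y2"
    proof -
      have "vnorm v2 = L2_set (\<lambda>j. cmod (\<Sum>i\<in>I. R $$ (j,i) * z $ i)) {..<m}"
        unfolding vnorm_L2 by (intro L2_set_cong) (auto simp: v2_def)
      also have "\<dots> \<le> L2_set (\<lambda>j. \<Sum>i\<in>I. cmod (R $$ (j,i)) * cmod (z $ i)) {..<m}"
        by (intro L2_set_mono order_trans[OF norm_sum]) (auto simp: norm_mult)
      also have "\<dots> \<le> (\<Sum>i\<in>I. L2_set (\<lambda>j. cmod (R $$ (j,i)) * cmod (z $ i)) {..<m})"
        by (rule L2_set_sum_le) (auto simp: I_def)
      also have "\<dots> = (\<Sum>i\<in>I. vnorm (r i) * cmod (z $ i))"
        by (intro sum.cong refl) (simp add: vr I_def L2_set_left_distrib)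
      also have "\<dots> \<le> (\<Sum>i\<in>I. vnorm (r i) * (vnorm y2 * vnorm (r i) / cmod (l - lh i)))"
        using zi[OF gp] by (intro sum_mono mult_left_mono) auto
      also have "\<dots> = Ss * vnorm y2"
        unfolding Ss_def I_def sum_distrib_right by (intro sum.cong) (auto simp: power2_eq_square)
      finally show ?thesis .
    qed
    have PB: "P \<le> (T * vnorm y2)\<^sup>2"
    proof -
      have "P = (L2_set (\<lambda>i. cmod (z $ i)) I)\<^sup>2"
        unfolding P_def L2_set_def using S0 by simp
      also have "\<dots> \<le> (\<Sum>i\<in>I. cmod (z $ i))\<^sup>2"
        by (intro power_mono L2_set_le_sum) (auto simp: L2_set_nonneg)
      also have "\<dots> \<le> (\<Sum>i\<in>I. vnorm y2 * vnorm (r i) / cmod (l - lh i))\<^sup>2"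
        using zi[OF gp] by (intro power_mono sum_mono) (auto simp: sum_nonneg)
      also have "(\<Sum>i\<in>I. vnorm y2 * vnorm (r i) / cmod (l - lh i)) = T * vnorm y2"
        unfolding T_def I_def sum_distrib_right by (intro sum.cong) auto
      finally show ?thesis .
    qed
    show "ereal sn \<le> ereal (vnorm (r 0)) / (Gap - ereal Ss) * ereal (sqrt (1 + T\<^sup>2))"
    proof (rule final_ereal[OF G sn_bound[OF PB]])
      show "(g - Ss) * vnorm y2 \<le> vnorm (r 0)" if "Gap = ereal g" for g
        using Gfin[OF that] v2b by (simp add: left_diff_distrib)
    qed (use Ginf in auto)
  qed
  define R2 where "R2 = mat (n - k) (k - 1) (\<lambda>(i,j). R $$ (i, j + 1))"
  have R2c: "R2 \<in> carrier_mat m (k - 1)" by (simp add: R2_def m_def)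
  have km: "0 < k - 1" using k2 by simp
  define z' where "z' = vec (k - 1) (\<lambda>i. z $ Suc i)"
  have z'c: "z' \<in> carrier_vec (k - 1)" by (simp add: z'_def)
  have v2R2: "v2 = R2 *\<^sub>v z'"
  proof (rule eq_vecI)
    fix j assume "j < dim_vec (R2 *\<^sub>v z')"
    hence j: "j < m" using R2c by simp
    have "(R2 *\<^sub>v z') $ j = (\<Sum>i<k-1. R2 $$ (j,i) * z' $ i)"
      using R2c z'c j by (simp add: mult_mat_vec_def scalar_prod_def atLeast0LessThan)
    also have "\<dots> = (\<Sum>i<k-1. R $$ (j, Suc i) * z $ Suc i)"
      using j by (intro sum.cong) (auto simp: R2_def z'_def m_def)
    also have "\<dots> = (\<Sum>i\<in>I. R $$ (j,i) * z $ i)"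
      unfolding I_def by (rule reidx1[OF k1, symmetric])
    finally show "v2 $ j = (R2 *\<^sub>v z') $ j" using j by (simp add: v2_def)
  qed (use R2c in \<open>auto simp: v2_def\<close>)
  have nz': "(vnorm z')\<^sup>2 = P"
  proof -
    have "(vnorm z')\<^sup>2 = (\<Sum>i<k-1. (cmod (z $ Suc i))\<^sup>2)"
      unfolding vnorm_sq by (intro sum.cong) (auto simp: z'_def)
    also have "\<dots> = P" unfolding P_def I_def by (rule reidx1[OF k1, symmetric])
    finally show ?thesis .
  qed
  define c1 where "c1 = (spec_norm R2)\<^sup>2 / gap"
  have partI: "0 < gap \<and> ereal c1 < Gap \<longrightarrow>
      ereal sn \<le> ereal (vnorm (r 0)) / (Gap - ereal c1) * ereal (sqrt (1 + (spec_norm R2)\<^sup>2 / gap\<^sup>2))"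
  proof (intro impI, elim conjE)
    assume gp: "0 < gap" and G: "ereal c1 < Gap"
    have sR0: "0 \<le> spec_norm R2" by (rule spec_norm_nonneg[OF R2c km])
    have adjc: "cmod (z' $ i) * gap \<le> cmod ((mat_adjoint R2 *\<^sub>v y2) $ i)" if i: "i < k - 1" for i
    proof -
      have iI: "Suc i \<in> I" using i by (auto simp: I_def)
      have "(mat_adjoint R2 *\<^sub>v y2) $ i = (\<Sum>t<m. cnj (R2 $$ (t,i)) * y2 $ t)"
        by (rule adj_mv_index[OF R2c y2 i])
      also have "\<dots> = ip y2 (r (Suc i))"
        unfolding ip_def using y2 i Rc by (intro sum.cong) (auto simp: R2_def m_def r_def mult.commute)
      finally have e: "cmod ((mat_adjoint R2 *\<^sub>v y2) $ i) = cmod (z $ Suc i) * cmod (l - lh (Suc i))"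
        using zb[OF iI] by simp
      have "cmod (z' $ i) * gap \<le> cmod (z $ Suc i) * cmod (l - lh (Suc i))"
        using gap_le[OF iI] i by (simp add: z'_def mult_left_mono)
      thus ?thesis using e by simp
    qed
    have z'b: "vnorm z' * gap \<le> spec_norm R2 * vnorm y2"
    proof -
      have "(vnorm z' * gap)\<^sup>2 = (\<Sum>i<k-1. (cmod (z' $ i) * gap)\<^sup>2)"
        by (simp add: power_mult_distrib vnorm_sq sum_distrib_right z'_def)
      also have "\<dots> \<le> (\<Sum>i<k-1. (cmod ((mat_adjoint R2 *\<^sub>v y2) $ i))\<^sup>2)"
        using adjc gp by (intro sum_mono power_mono) auto
      also have "\<dots> = (vnorm (mat_adjoint R2 *\<^sub>v y2))\<^sup>2" using R2c by (simp add: vnorm_sq)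
      finally have "vnorm z' * gap \<le> vnorm (mat_adjoint R2 *\<^sub>v y2)"
        by (rule power2_le_imp_le) simp
      also have "\<dots> \<le> spec_norm R2 * vnorm y2" by (rule spec_norm_adj_bound[OF R2c km y2])
      finally show ?thesis .
    qed
    hence z'b2: "vnorm z' \<le> spec_norm R2 / gap * vnorm y2" using gp by (simp add: field_simps)
    have PB: "P \<le> (spec_norm R2 / gap * vnorm y2)\<^sup>2"
      unfolding nz'[symmetric] using z'b2 by (intro power_mono) auto
    have v2b: "vnorm v2 \<le> c1 * vnorm y2"
    proof -
      have "vnorm v2 \<le> spec_norm R2 * vnorm z'" unfolding v2R2 by (rule spec_norm_bound[OF R2c z'c])
      also have "\<dots> \<le> spec_norm R2 * (spec_norm R2 / gap * vnorm y2)" using z'b2 sR0 by (rule mult_left_mono)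
      also have "\<dots> = c1 * vnorm y2" by (simp add: c1_def power2_eq_square)
      finally show ?thesis .
    qed
    have "sn \<le> vnorm y2 * sqrt (1 + (spec_norm R2 / gap)\<^sup>2)" by (rule sn_bound[OF PB])
    hence snb: "sn \<le> vnorm y2 * sqrt (1 + (spec_norm R2)\<^sup>2 / gap\<^sup>2)" by (simp add: power_divide)
    show "ereal sn \<le> ereal (vnorm (r 0)) / (Gap - ereal c1) * ereal (sqrt (1 + (spec_norm R2)\<^sup>2 / gap\<^sup>2))"
    proof (rule final_ereal[OF G snb])
      show "(g - c1) * vnorm y2 \<le> vnorm (r 0)" if "Gap = ereal g" for g
        using Gfin[OF that] v2b by (simp add: left_diff_distrib)
    qed (use Ginf in auto)
  qed
  from partI partII show ?thesis
    unfolding Let_def sn_def r_def Ss_def T_def Gap_def gap_def m_def R_def A3_def R2_def c1_def by simp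
qed

end
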